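(* Let $K$ be a field of characteristic zero, $m\in K[x,y]$ irreducible over $K(x)$ with $n=\deg_y(m)$, and $A=K(x)[y]/\langle m\rangle$ equipped with the derivation $'$ extending $d/dx$. Let $W=(\omega_1,\dots,\omega_n)$ be a suitable basis of $A$ with $e\in K[x]$, $M=(m_{i,j})\in K[x]^{n\times n}$ such that $eW'=MW$ and $\gcd(e,m_{1,1},\dots,m_{n,n})=1$. Let $h=\sum_{i=1}^n\frac{h_i}{de}\omega_i$ with $h_1,\dots,h_n,d\in K[x]$, $\gcd(d,e)=\gcd(h_1,\dots,h_n,d)=1$ and $d$ squarefree. If $h$ is integrable in $A$ and $W$ is a local integral basis at $a\in\bar K$, then $a$ is not a root of $d$.
   Context: $h$ is integrable in $A$ if $h=H'$ for some $H\in A$. $\bar K$ is the algebraic closure of $K$. For $a\in\bar K$, the $n$ roots of $m$ in the Puiseux series field $\bar K\langle\langle x-a\rangle\rangle=\bigcup_{r\ge1}\bar K((\,(x-a)^{1/r}))$ give $K(x)$-embeddings $\sigma_1,\dots,\sigma_n$ of $A$ into it. For a nonzero series $P=\sum_{i\ge0}c_i(x-a)^{r_i}$ with $c_0\neq0$ set $\nu_a(P)=r_0$; for $f\in A$, $\operatorname{val}_a(f)=\min_i\nu_a(\sigma_i(f))$. $f$ is locally integral at $a$ if $\operatorname{val}_a(f)\ge0$, and integral if locally integral at every $a\in\bar K$. A $K(x)$-basis $W$ is a local integral basis at $a$ if its elements are locally integral at $a$ and every element of $A$ locally integral at $a$ is a linear combination of $W$ with coefficients in $K(x)$ having no pole at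 $a$. A suitable basis is a $K(x)$-basis of $A$ consisting of integral elements for which the normalized $e$ above is squarefree. *)

theory Defs
  imports "HOL-Computational_Algebra.Computational_Algebra"
begin

(* K = 'k (field_char_0); K[x] = 'k poly; K(x) = 'k poly fract;
   K[x,y] = 'k poly poly (outer variable y);
   A = K(x)[y]/<m>, elements represented by 'k poly fract poly, equality modulo m. *)

definition mR :: "'k::{field_char_0,field_gcd} poly poly \<Rightarrow> 'k poly fract poly" where
  "mR m = map_poly to_fract m"

definition rf_deriv :: "'k::{field_char_0,field_gcd} poly fract \<Rightarrow> 'k poly fract" where
  "rf_deriv c = (case quot_of_fract c of (p, q) \<Rightarrow>
      Fract (pderiv p * q - p * pderiv q) (q * q))"

(* the derivation ' on A extending d/dx:  (p(x,y))' = p_x + p_y * y',  y' = - m_x / m_y  in A *)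
definition A_deriv :: "'k::{field_char_0,field_gcd} poly poly \<Rightarrow> 'k poly fract poly \<Rightarrow> 'k poly fract poly" where
  "A_deriv m p = (let Mf = mR m;
                      u = (SOME u. Mf dvd (u * pderiv Mf - 1));
                      yp = - (map_poly rf_deriv Mf * u)
                  in (map_poly rf_deriv p + pderiv p * yp) mod Mf)"

definition integrable :: "'k::{field_char_0,field_gcd} poly poly \<Rightarrow> 'k poly fract poly \<Rightarrow> bool" where
  "integrable m h \<longleftrightarrow> (\<exists>H. mR m dvd (A_deriv m H - h))"

definition alg_closure_of :: "('k::field \<Rightarrow> 'c::field) \<Rightarrow> bool" where
  "alg_closure_of \<iota> \<longleftrightarrow>
     (\<forall>x y. \<iota> (x + y) = \<iota> x + \<iota> y) \<and> (\<forall>x y. \<iota> (x * y) = \<iota> x * \<iota> y) \<and> \<iota> 1 = 1 \<and>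
     (\<forall>p::'c poly. degree p \<ge> 1 \<longrightarrow> (\<exists>z. poly p z = 0)) \<and>
     (\<forall>z::'c. \<exists>p::'k poly. p \<noteq> 0 \<and> poly (map_poly \<iota> p) z = 0)"

(* Puiseux embeddings at a: with t = (x-a)^(1/r), an element of Kbar((t)) *)
definition subst_K :: "('k::{field_char_0,field_gcd} \<Rightarrow> 'c::field) \<Rightarrow> 'c \<Rightarrow> nat \<Rightarrow> 'k poly \<Rightarrow> 'c fls" where
  "subst_K \<iota> a r p = poly (map_poly (fls_const \<circ> \<iota>) p) (fls_const a + fls_X ^ r)"

definition subst_rf :: "('k::{field_char_0,field_gcd} \<Rightarrow> 'c::field) \<Rightarrow> 'c \<Rightarrow> nat \<Rightarrow> 'k poly fract \<Rightarrow> 'c fls" where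
  "subst_rf \<iota> a r c = (case quot_of_fract c of (p, q) \<Rightarrow> subst_K \<iota> a r p / subst_K \<iota> a r q)"

definition puiseux_eval ::
  "('k::{field_char_0,field_gcd} \<Rightarrow> 'c::field) \<Rightarrow> 'c \<Rightarrow> nat \<Rightarrow> 'c fls \<Rightarrow> 'k poly fract poly \<Rightarrow> 'c fls" where
  "puiseux_eval \<iota> a r Y f = poly (map_poly (subst_rf \<iota> a r) f) Y"

(* val_a(f) >= 0: for every embedding sigma of A into the Puiseux series field at a,
   i.e. every root Y of m in Kbar((t)) with x - a = t^r, nu(sigma(f)) = subdeg/r >= 0 *)
definition locally_integral ::
  "('k::{field_char_0,field_gcd} \<Rightarrow> 'c::field) \<Rightarrow> 'k poly poly \<Rightarrow> 'c \<Rightarrow> 'k poly fract poly \<Rightarrow> bool" where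
  "locally_integral \<iota> m a f \<longleftrightarrow>
     (\<forall>r\<ge>1. \<forall>Y. puiseux_eval \<iota> a r Y (mR m) = 0 \<longrightarrow> 0 \<le> fls_subdegree (puiseux_eval \<iota> a r Y f))"

definition integral_elem ::
  "('k::{field_char_0,field_gcd} \<Rightarrow> 'c::field) \<Rightarrow> 'k poly poly \<Rightarrow> 'k poly fract poly \<Rightarrow> bool" where
  "integral_elem \<iota> m f \<longleftrightarrow> (\<forall>a. locally_integral \<iota> m a f)"

definition no_pole :: "('k::{field_char_0,field_gcd} \<Rightarrow> 'c::field) \<Rightarrow> 'k poly fract \<Rightarrow> 'c \<Rightarrow> bool" where
  "no_pole \<iota> c a \<longleftrightarrow> poly (map_poly \<iota> (snd (quot_of_fract c))) a \<noteq> 0"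

definition is_basis :: "'k::{field_char_0,field_gcd} poly poly \<Rightarrow> (nat \<Rightarrow> 'k poly fract poly) \<Rightarrow> bool" where
  "is_basis m W \<longleftrightarrow>
     (\<forall>c. mR m dvd (\<Sum>i<degree m. smult (c i) (W i)) \<longrightarrow> (\<forall>i<degree m. c i = 0)) \<and>
     (\<forall>f. \<exists>c. mR m dvd (f - (\<Sum>i<degree m. smult (c i) (W i))))"

definition deriv_rel ::
  "'k::{field_char_0,field_gcd} poly poly \<Rightarrow> (nat \<Rightarrow> 'k poly fract poly) \<Rightarrow> 'k poly \<Rightarrow> (nat \<Rightarrow> nat \<Rightarrow> 'k poly) \<Rightarrow> bool" where
  "deriv_rel m W e M \<longleftrightarrow>
     (\<forall>i<degree m. mR m dvd (smult (to_fract e) (A_deriv m (W i))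
                            - (\<Sum>j<degree m. smult (to_fract (M i j)) (W j))))"

definition suitable_basis ::
  "('k::{field_char_0,field_gcd} \<Rightarrow> 'c::field) \<Rightarrow> 'k poly poly \<Rightarrow> (nat \<Rightarrow> 'k poly fract poly) \<Rightarrow> bool" where
  "suitable_basis \<iota> m W \<longleftrightarrow>
     is_basis m W \<and> (\<forall>i<degree m. integral_elem \<iota> m (W i)) \<and>
     (\<exists>e M. e \<noteq> 0 \<and> deriv_rel m W e M \<and>
        Gcd (insert e {M i j |i j. i < degree m \<and> j < degree m}) = 1 \<and> squarefree e)"

definition local_integral_basis ::
  "('k::{field_char_0,field_gcd} \<Rightarrow> 'c::field) \<Rightarrow> 'k poly poly \<Rightarrow> 'c \<Rightarrow> (nat \<Rightarrow> 'k poly fract poly) \<Rightarrow> bool" where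
  "local_integral_basis \<iota> m a W \<longleftrightarrow>
     is_basis m W \<and> (\<forall>i<degree m. locally_integral \<iota> m a (W i)) \<and>
     (\<forall>f. locally_integral \<iota> m a f \<longrightarrow>
        (\<exists>c. (\<forall>i<degree m. no_pole \<iota> (c i) a) \<and>
             mR m dvd (f - (\<Sum>i<degree m. smult (c i) (W i)))))"

end

theory Submission
  imports Defs
begin

lemma rf_deriv_Fract:
  fixes p s :: "'k::{field_char_0,field_gcd} poly"
  assumes "s \<noteq> 0"
  shows "rf_deriv (Fract p s) = Fract (pderiv p * s - p * pderiv s) (s * s)"
proof -
  obtain p0 s0 where q: "quot_of_fract (Fract p s) = (p0, s0)" by (cases "quot_of_fract (Fract p s)") auto
  have s0: "s0 \<noteq> 0" using snd_quot_of_fract_nonzero[of "Fract p s"] q by simp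
  have "Fract p0 s0 = Fract p s" using Fract_quot_of_fract[of "Fract p s"] q by simp
  hence E1: "p0 * s = p * s0" using s0 assms by (simp add: eq_fract)
  hence "pderiv (p0 * s) = pderiv (p * s0)" by simp
  hence E2: "pderiv p0 * s + p0 * pderiv s = pderiv p * s0 + p * pderiv s0" by (simp add: pderiv_mult algebra_simps)
  have "(pderiv p0 * s0 - p0 * pderiv s0) * (s * s) = (pderiv p * s - p * pderiv s) * (s0 * s0)"
    using E1 E2 by algebra
  then show ?thesis unfolding rf_deriv_def q using s0 assms by (simp add: eq_fract)
qed

lemma rf_deriv_add: "rf_deriv (a + b) = rf_deriv a + rf_deriv (b :: 'k::{field_char_0,field_gcd} poly fract)"
proof (cases a, cases b)
  fix p s p' s' assume a: "a = Fract p s" "s \<noteq> 0" and b: "b = Fract p' s'" "s' \<noteq> 0"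
  show ?thesis using a b by (simp add: rf_deriv_Fract eq_fract pderiv_mult pderiv_add pderiv_diff algebra_simps)
qed

lemma rf_deriv_mult: "rf_deriv (a * b) = rf_deriv a * b + a * rf_deriv (b :: 'k::{field_char_0,field_gcd} poly fract)"
proof (cases a, cases b)
  fix p s p' s' assume a: "a = Fract p s" "s \<noteq> 0" and b: "b = Fract p' s'" "s' \<noteq> 0"
  show ?thesis using a b by (simp add: rf_deriv_Fract eq_fract pderiv_mult pderiv_add pderiv_diff algebra_simps)
qed

lemma rf_deriv_0 [simp]: "rf_deriv (0 :: 'k::{field_char_0,field_gcd} poly fract) = 0"
  using rf_deriv_Fract[of 1 "0::'k poly"] by (simp add: fract_collapse)

lemma rf_deriv_uminus: "rf_deriv (- a) = - rf_deriv (a :: 'k::{field_char_0,field_gcd} poly fract)"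
proof (cases a)
  fix p s assume a: "a = Fract p s" "s \<noteq> 0"
  show ?thesis using a by (simp add: rf_deriv_Fract eq_fract pderiv_minus algebra_simps)
qed

lemma rf_deriv_diff: "rf_deriv (a - b) = rf_deriv a - rf_deriv (b :: 'k::{field_char_0,field_gcd} poly fract)"
  using rf_deriv_add[of a "-b"] rf_deriv_uminus[of b] by simp

lemma rf_deriv_sum: "rf_deriv (sum f A) = (\<Sum>x\<in>A. rf_deriv (f x :: 'k::{field_char_0,field_gcd} poly fract))"
  by (induction A rule: infinite_finite_induct) (auto simp: rf_deriv_add)

lemma bezout_irred:
  fixes P Q :: "'a::field poly"
  assumes irr: "irreducible P" and Q: "Q \<noteq> 0" and deg: "degree Q < degree P"
  shows "\<exists>u. P dvd (u * Q - 1)"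
proof -
  define S where "S = {g. g \<noteq> 0 \<and> (\<exists>u v. g = u * Q + v * P)}"
  have "Q \<in> S" unfolding S_def using Q by (auto intro: exI[of _ 1] exI[of _ 0])
  hence "\<exists>k. \<exists>g\<in>S. degree g = k" by blast
  then obtain k where k: "\<exists>g\<in>S. degree g = k" and kmin: "\<And>k'. k' < k \<Longrightarrow> \<not>(\<exists>g\<in>S. degree g = k')"
    using exists_least_iff[of "\<lambda>k. \<exists>g\<in>S. degree g = k"] by blast
  then obtain g where gS: "g \<in> S" and gk: "degree g = k" by blast
  from gS obtain u v where g0: "g \<noteq> 0" and guv: "g = u * Q + v * P" unfolding S_def by blast
  have divs: "g dvd x" if "x = a * Q + b * P" for x a b
  proof (rule ccontr)
    assume nd: "\<not> g dvd x"
    hence r0: "x mod g \<noteq> 0" by (simp add: mod_eq_0_iff_dvd)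
    have "x mod g = x - (x div g) * g" by (simp add: minus_div_mult_eq_mod)
    also have "\<dots> = (a - (x div g) * u) * Q + (b - (x div g) * v) * P" using that guv by (simp add: algebra_simps)
    finally have "x mod g \<in> S" unfolding S_def using r0 by blast
    moreover have "degree (x mod g) < k" using degree_mod_less'[OF g0 r0] gk by simp
    ultimately show False using kmin by blast
  qed
  have gQ: "g dvd Q" by (rule divs[of Q 1 0]) simp
  have gP: "g dvd P" by (rule divs[of P 0 1]) simp
  then obtain h where Ph: "P = g * h" by (elim dvdE)
  from irreducibleD[OF irr Ph] have "g dvd 1"
  proof
    assume "h dvd 1"
    hence "P dvd g" using Ph by (metis dvd_mult_unit_iff dvd_refl)
    hence "P dvd Q" using gQ by (rule dvd_trans)
    hence "degree P \<le> degree Q" using Q by (rule dvd_imp_degree_le)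
    with deg show ?thesis by simp
  qed
  then obtain gi where gi: "1 = g * gi" by (elim dvdE)
  have "u * gi * Q - 1 = - (v * gi * P)" using gi guv by (simp add: algebra_simps)
  hence "P dvd (u * gi * Q - 1)" by simp
  thus ?thesis by blast
qed

lemma pderiv_fract_facts:
  fixes P :: "'k::{field_char_0,field_gcd} poly fract poly"
  assumes "degree P \<ge> 1"
  shows "pderiv P \<noteq> 0" "degree (pderiv P) < degree P"
proof -
  have nz: "(of_nat (Suc n) :: 'k poly fract) \<noteq> 0" for n
  proof -
    have "(of_nat (Suc n) :: 'k poly fract) = to_fract (of_nat (Suc n))"
      unfolding to_fract_def by (rule of_nat_fract)
    moreover have "(of_nat (Suc n) :: 'k poly) \<noteq> 0" by (rule of_nat_neq_0)
    ultimately show ?thesis by (metis to_fract_eq_0_iff)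
  qed
  obtain n where n: "degree P = Suc n" using assms by (cases "degree P") auto
  have "coeff (pderiv P) n = of_nat (Suc n) * lead_coeff P" by (simp add: coeff_pderiv n)
  also have "\<dots> \<noteq> 0"
  proof -
    have "P \<noteq> 0" using n by auto
    hence "lead_coeff P \<noteq> 0" by simp
    thus ?thesis using nz[of n] by (metis mult_eq_0_iff)
  qed
  finally show "pderiv P \<noteq> 0" by auto
  have "degree (pderiv P) \<le> n"
    by (rule degree_le) (auto simp: coeff_pderiv n coeff_eq_0)
  thus "degree (pderiv P) < degree P" using n by simp
qed

lemma map_rf_add: "map_poly rf_deriv (p + q) = map_poly rf_deriv p + map_poly rf_deriv (q :: 'k::{field_char_0,field_gcd} poly fract poly)"
  by (rule poly_eqI) (simp add: coeff_map_poly rf_deriv_add)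

lemma map_rf_uminus: "map_poly rf_deriv (- p) = - map_poly rf_deriv (p :: 'k::{field_char_0,field_gcd} poly fract poly)"
  by (rule poly_eqI) (simp add: coeff_map_poly rf_deriv_uminus)

lemma map_rf_diff: "map_poly rf_deriv (p - q) = map_poly rf_deriv p - map_poly rf_deriv (q :: 'k::{field_char_0,field_gcd} poly fract poly)"
  by (rule poly_eqI) (simp add: coeff_map_poly rf_deriv_diff)

lemma map_rf_smult: "map_poly rf_deriv (smult c p) = smult (rf_deriv c) p + smult c (map_poly rf_deriv (p :: 'k::{field_char_0,field_gcd} poly fract poly))"
  by (rule poly_eqI) (simp add: coeff_map_poly rf_deriv_mult)

lemma map_rf_pCons0: "map_poly rf_deriv (pCons 0 p) = pCons 0 (map_poly rf_deriv (p :: 'k::{field_char_0,field_gcd} poly fract poly))"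
  by (simp add: map_poly_pCons)

lemma map_rf_mult: "map_poly rf_deriv (p * q) = map_poly rf_deriv p * q + p * map_poly rf_deriv (q :: 'k::{field_char_0,field_gcd} poly fract poly)"
proof (induction p)
  case 0
  then show ?case by simp
next
  case (pCons a p)
  have "map_poly rf_deriv (pCons a p * q) = map_poly rf_deriv (smult a q + pCons 0 (p * q))"
    by simp
  also have "\<dots> = smult (rf_deriv a) q + smult a (map_poly rf_deriv q) + pCons 0 (map_poly rf_deriv p * q + p * map_poly rf_deriv q)"
    by (simp add: map_rf_add map_rf_smult map_rf_pCons0 pCons.IH)
  also have "\<dots> = map_poly rf_deriv (pCons a p) * q + pCons a p * map_poly rf_deriv q"
    by (simp add: map_poly_pCons algebra_simps)
  finally show ?case .
qed

lemma map_rf_sum: "map_poly rf_deriv (sum f A) = (\<Sum>x\<in>A. map_poly rf_deriv (f x :: 'k::{field_char_0,field_gcd} poly fract poly))"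
  by (induction A rule: infinite_finite_induct) (auto simp: map_rf_add)

definition Dp :: "'k::{field_char_0,field_gcd} poly fract poly \<Rightarrow> 'k poly fract poly \<Rightarrow> 'k poly fract poly" where
  "Dp yp p = map_poly rf_deriv p + pderiv p * yp"

definition ypm :: "'k::{field_char_0,field_gcd} poly poly \<Rightarrow> 'k poly fract poly" where
  "ypm m = - (map_poly rf_deriv (mR m) * (SOME u. mR m dvd (u * pderiv (mR m) - 1)))"

lemma A_deriv_Dp: "A_deriv m p = Dp (ypm m) p mod mR m"
  unfolding A_deriv_def Dp_def ypm_def Let_def by simp

lemma Dp_add: "Dp yp (p + q) = Dp yp p + Dp yp q"
  unfolding Dp_def by (simp add: map_rf_add pderiv_add algebra_simps)

lemma Dp_diff: "Dp yp (p - q) = Dp yp p - Dp yp q"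
  unfolding Dp_def by (simp add: map_rf_diff pderiv_diff algebra_simps)

lemma Dp_mult: "Dp yp (p * q) = Dp yp p * q + p * Dp yp q"
  unfolding Dp_def by (simp add: map_rf_mult pderiv_mult algebra_simps)

lemma Dp_smult: "Dp yp (smult c p) = smult (rf_deriv c) p + smult c (Dp yp p)"
  unfolding Dp_def by (simp add: map_rf_smult pderiv_smult smult_add_right algebra_simps)

lemma Dp_sum: "Dp yp (sum f A) = (\<Sum>x\<in>A. Dp yp (f x))"
proof (induction A rule: infinite_finite_induct)
  case (infinite A)
  then show ?case by (simp add: Dp_def)
next
  case empty
  then show ?case by (simp add: Dp_def)
next
  case (insert x F)
  then show ?case by (simp add: Dp_add)
qed

lemma u_prop:
  assumes irr: "irreducible (mR m)"
  shows "mR m dvd ((SOME u. mR m dvd (u * pderiv (mR m) - 1)) * pderiv (mR m) - 1)"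
proof -
  have "mR m \<noteq> 0" using irr by auto
  moreover have "degree (mR m) \<noteq> 0"
  proof
    assume "degree (mR m) = 0"
    hence "is_unit (mR m)" using \<open>mR m \<noteq> 0\<close> is_unit_iff_degree by blast
    thus False using irr irreducible_not_unit by blast
  qed
  ultimately have d1: "degree (mR m) \<ge> 1" by simp
  have "\<exists>u. mR m dvd (u * pderiv (mR m) - 1)"
    by (rule bezout_irred[OF irr pderiv_fract_facts[OF d1]])
  thus ?thesis by (rule someI_ex)
qed

lemma Dp_mR:
  assumes irr: "irreducible (mR m)"
  shows "mR m dvd Dp (ypm m) (mR m)"
proof -
  define u where "u = (SOME u. mR m dvd (u * pderiv (mR m) - 1))"
  have "Dp (ypm m) (mR m) = - (map_poly rf_deriv (mR m) * (u * pderiv (mR m) - 1))"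
    unfolding Dp_def ypm_def u_def[symmetric] by (simp add: algebra_simps)
  also have "mR m dvd \<dots>" using u_prop[OF irr] unfolding u_def[symmetric] by simp
  finally show ?thesis .
qed

lemma A_deriv_cong_Dp:
  "mR m dvd (A_deriv m p - Dp (ypm m) p)"
proof -
  have "A_deriv m p - Dp (ypm m) p = - (Dp (ypm m) p div mR m * mR m)"
    unfolding A_deriv_Dp by (simp add: minus_div_mult_eq_mod[symmetric])
  thus ?thesis by simp
qed

lemma Dp_cong:
  assumes irr: "irreducible (mR m)" and "mR m dvd (p - q)"
  shows "mR m dvd (Dp (ypm m) p - Dp (ypm m) q)"
proof -
  from assms(2) obtain g where g: "p - q = mR m * g" by (elim dvdE)
  have "Dp (ypm m) p - Dp (ypm m) q = Dp (ypm m) (mR m) * g + mR m * Dp (ypm m) g"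
    by (simp add: Dp_diff[symmetric] g Dp_mult)
  also have "mR m dvd \<dots>" using Dp_mR[OF irr] by simp
  finally show ?thesis .
qed

definition vq :: "'k::{field_char_0,field_gcd} poly \<Rightarrow> 'k poly fract \<Rightarrow> int" where
  "vq q c = int (multiplicity q (fst (quot_of_fract c))) - int (multiplicity q (snd (quot_of_fract c)))"

definition okq :: "'k::{field_char_0,field_gcd} poly \<Rightarrow> int \<Rightarrow> 'k poly fract \<Rightarrow> bool" where
  "okq q k c \<longleftrightarrow> c = 0 \<or> k \<le> vq q c"

lemma Fract_eq0_iff: "b \<noteq> 0 \<Longrightarrow> Fract a b = 0 \<longleftrightarrow> a = (0::'a::idom)"
  by (simp add: Zero_fract_def eq_fract)

lemma mult_qpow:
  fixes q :: "'k::{field_char_0,field_gcd} poly"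
  assumes "prime_elem q" "x \<noteq> 0"
  shows "multiplicity q (q ^ n * x) = n + multiplicity q x"
  using assms by (simp add: prime_elem_multiplicity_mult_distrib prime_elem_not_zeroI)

lemma vq_Fract:
  fixes q p s :: "'k::{field_char_0,field_gcd} poly"
  assumes q: "prime_elem q" and p: "p \<noteq> 0" and s: "s \<noteq> 0"
  shows "vq q (Fract p s) = int (multiplicity q p) - int (multiplicity q s)"
proof -
  obtain p0 s0 where qq: "quot_of_fract (Fract p s) = (p0, s0)" by (cases "quot_of_fract (Fract p s)") auto
  have s0: "s0 \<noteq> 0" using snd_quot_of_fract_nonzero[of "Fract p s"] qq by simp
  have "Fract p s \<noteq> 0" using p s by (simp add: Fract_eq0_iff)
  hence p0: "p0 \<noteq> 0" using fst_quot_of_fract_eq_0_iff[of "Fract p s"] qq by simp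
  have "Fract p0 s0 = Fract p s" using Fract_quot_of_fract[of "Fract p s"] qq by simp
  hence E1: "p0 * s = p * s0" using s0 s by (simp add: eq_fract)
  hence "multiplicity q (p0 * s) = multiplicity q (p * s0)" by simp
  hence "multiplicity q p0 + multiplicity q s = multiplicity q p + multiplicity q s0"
    using q p s p0 s0 by (simp add: prime_elem_multiplicity_mult_distrib)
  thus ?thesis unfolding vq_def qq by simp
qed

lemma okq_add:
  fixes q :: "'k::{field_char_0,field_gcd} poly"
  assumes q: "prime_elem q" and a: "okq q k a" and b: "okq q k b"
  shows "okq q k (a + b)"
proof (cases a rule: Fract_cases_nonzero)
  case 0 thus ?thesis using b by simp
next
  case (Fract p s) note A = this
  show ?thesis
  proof (cases b rule: Fract_cases_nonzero)
    case 0 thus ?thesis using a by simp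
  next
    case (Fract p' s') note B = this
    define N where "N = p * s' + p' * s"
    have ab: "a + b = Fract N (s * s')" using A B by (simp add: N_def)
    show ?thesis
    proof (cases "N = 0")
      case True thus ?thesis using ab by (simp add: okq_def Fract_eq0_iff A B)
    next
      case False
      have qnu: "\<not> is_unit q" using q by (simp add: prime_elem_def)
      have ka: "k \<le> int (multiplicity q p) - int (multiplicity q s)"
        using a A by (simp add: okq_def vq_Fract[OF q] Fract_eq0_iff)
      have kb: "k \<le> int (multiplicity q p') - int (multiplicity q s')"
        using b B by (simp add: okq_def vq_Fract[OF q] Fract_eq0_iff)
      define r where "r = min (multiplicity q p + multiplicity q s') (multiplicity q p' + multiplicity q s)"
      have d1: "q ^ (multiplicity q p + multiplicity q s') dvd p * s'"
        by (simp add: power_add mult_dvd_mono multiplicity_dvd)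
      have d2: "q ^ (multiplicity q p' + multiplicity q s) dvd p' * s"
        by (simp add: power_add mult_dvd_mono multiplicity_dvd)
      have "q ^ r dvd p * s'" using d1 by (rule dvd_trans[rotated]) (simp add: r_def le_imp_power_dvd)
      moreover have "q ^ r dvd p' * s" using d2 by (rule dvd_trans[rotated]) (simp add: r_def le_imp_power_dvd)
      ultimately have "q ^ r dvd N" unfolding N_def by simp
      hence "r \<le> multiplicity q N" using multiplicity_geI[OF False qnu] by blast
      moreover have "vq q (a + b) = int (multiplicity q N) - int (multiplicity q s) - int (multiplicity q s')"
        using ab A B False q by (simp add: vq_Fract prime_elem_multiplicity_mult_distrib)
      ultimately show ?thesis using ka kb unfolding okq_def r_def by auto
    qed
  qed
qed

lemma okq_mult:
  fixes q :: "'k::{field_char_0,field_gcd} poly"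
  assumes q: "prime_elem q" and a: "okq q k a" and b: "okq q l b"
  shows "okq q (k + l) (a * b)"
proof (cases a rule: Fract_cases_nonzero)
  case 0 thus ?thesis by (simp add: okq_def)
next
  case (Fract p s) note A = this
  show ?thesis
  proof (cases b rule: Fract_cases_nonzero)
    case 0 thus ?thesis by (simp add: okq_def)
  next
    case (Fract p' s') note B = this
    have ka: "k \<le> int (multiplicity q p) - int (multiplicity q s)"
      using a A by (simp add: okq_def vq_Fract[OF q] Fract_eq0_iff)
    have kb: "l \<le> int (multiplicity q p') - int (multiplicity q s')"
      using b B by (simp add: okq_def vq_Fract[OF q] Fract_eq0_iff)
    have "vq q (a * b) = int (multiplicity q p) + int (multiplicity q p') - int (multiplicity q s) - int (multiplicity q s')"
      using A B q by (simp add: vq_Fract prime_elem_multiplicity_mult_distrib)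
    thus ?thesis using ka kb by (simp add: okq_def)
  qed
qed

lemma vq_uminus:
  fixes q :: "'k::{field_char_0,field_gcd} poly"
  assumes q: "prime_elem q"
  shows "vq q (- c) = vq q c"
proof (cases c rule: Fract_cases_nonzero)
  case 0 thus ?thesis by simp
next
  case (Fract p s)
  have "multiplicity q (- p) = multiplicity q p"
    using multiplicity_times_unit_right[of "-1" q p] by simp
  thus ?thesis using Fract q by (simp add: vq_Fract)
qed

lemma okq_uminus: "prime_elem q \<Longrightarrow> okq q k c \<Longrightarrow> okq q k (- c)"
  by (simp add: okq_def vq_uminus)

lemma okq_mono: "okq q k c \<Longrightarrow> k' \<le> k \<Longrightarrow> okq q k' c"
  by (auto simp: okq_def)

lemma okq_0 [simp]: "okq q k 0"
  by (simp add: okq_def)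

lemma okq_sum:
  fixes q :: "'k::{field_char_0,field_gcd} poly"
  assumes q: "prime_elem q"
  shows "(\<And>x. x \<in> A \<Longrightarrow> okq q k (f x)) \<Longrightarrow> okq q k (sum f A)"
  by (induction A rule: infinite_finite_induct) (auto intro: okq_add[OF q])

lemma okq_Fract0:
  fixes q :: "'k::{field_char_0,field_gcd} poly"
  assumes q: "prime_elem q" and "\<not> q dvd s" "s \<noteq> 0"
  shows "okq q 0 (Fract p s)"
proof (cases "p = 0")
  case True thus ?thesis by (simp add: okq_def fract_collapse)
next
  case False
  have "multiplicity q s = 0" using assms by (simp add: not_dvd_imp_multiplicity_0)
  thus ?thesis using False assms by (simp add: okq_def vq_Fract)
qed

lemma okq_strict:
  fixes q :: "'k::{field_char_0,field_gcd} poly"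
  assumes q: "prime_elem q" and a0: "a \<noteq> 0" and lt: "vq q a < k" and b: "okq q k b"
  shows "a + b \<noteq> 0 \<and> vq q (a + b) = vq q a"
proof
  show ab0: "a + b \<noteq> 0"
  proof
    assume "a + b = 0"
    hence "b = - a" by (simp add: eq_neg_iff_add_eq_0 add.commute)
    thus False using b lt a0 by (simp add: okq_def vq_uminus[OF q])
  qed
  have "okq q (vq q a) (a + b)"
  proof (rule okq_add[OF q])
    show "okq q (vq q a) a" by (simp add: okq_def)
    show "okq q (vq q a) b" using okq_mono[OF b] lt by simp
  qed
  hence ge: "vq q a \<le> vq q (a + b)" using ab0 by (simp add: okq_def)
  show "vq q (a + b) = vq q a"
  proof (rule ccontr)
    assume "vq q (a + b) \<noteq> vq q a"
    hence "okq q (vq q a + 1) (a + b)" using ge by (simp add: okq_def)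
    moreover have "okq q (vq q a + 1) (- b)" using okq_uminus[OF q b] lt by (auto intro: okq_mono)
    ultimately have "okq q (vq q a + 1) (a + b + - b)" by (rule okq_add[OF q])
    thus False using a0 by (simp add: okq_def)
  qed
qed

lemma decomp_Fract:
  fixes q p s :: "'k::{field_char_0,field_gcd} poly"
  assumes q: "prime_elem q" and p: "p \<noteq> 0" and s: "s \<noteq> 0"
  obtains p1 s1 a b where "p = q ^ a * p1" "\<not> q dvd p1"
    "s = q ^ b * s1" "\<not> q dvd s1" "a = multiplicity q p" "b = multiplicity q s"
proof -
  have qnu: "\<not> is_unit q" using q by (simp add: prime_elem_def)
  obtain p1 where "p = q ^ multiplicity q p * p1" "\<not> q dvd p1" using multiplicity_decompose'[OF p qnu] by blast
  moreover obtain s1 where "s = q ^ multiplicity q s * s1" "\<not> q dvd s1" using multiplicity_decompose'[OF s qnu] by blast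
  ultimately show ?thesis using that by blast
qed

lemma deriv_ok0:
  fixes q :: "'k::{field_char_0,field_gcd} poly"
  assumes q: "prime_elem q" and c: "okq q 0 c"
  shows "okq q 0 (rf_deriv c)"
proof (cases c rule: Fract_cases_nonzero)
  case 0 thus ?thesis by simp
next
  case (Fract p s)
  obtain p1 s1 a b where P: "p = q ^ a * p1" "\<not> q dvd p1"
    and S: "s = q ^ b * s1" "\<not> q dvd s1" and ab: "a = multiplicity q p" "b = multiplicity q s"
    by (rule decomp_Fract[OF q Fract(3) Fract(2)])
  have p10: "p1 \<noteq> 0" and s10: "s1 \<noteq> 0" using P S by auto
  have "0 \<le> vq q c" using c Fract by (simp add: okq_def Fract_eq0_iff)
  hence le: "b \<le> a" using Fract q ab by (simp add: vq_Fract)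
  define j where "j = a - b"
  have bj: "b + j = a" using le by (simp add: j_def)
  have "p = q ^ (b + j) * p1" using P(1) bj by simp
  also have "\<dots> = q ^ b * (q ^ j * p1)" by (simp add: power_add mult.assoc)
  finally have "p = q ^ b * (q ^ j * p1)" .
  hence "c = Fract (q ^ b * (q ^ j * p1)) (q ^ b * s1)"
    using Fract S by simp
  also have "\<dots> = Fract (q ^ j * p1) s1"
    by (rule mult_fract_cancel) (use q in \<open>simp add: prime_elem_not_zeroI\<close>)
  finally have c': "c = Fract (q ^ j * p1) s1" .
  have "\<not> q dvd s1 * s1" using S(2) q prime_elem_dvd_mult_iff by blast
  thus ?thesis unfolding c' using q s10
    by (simp add: rf_deriv_Fract okq_Fract0)
qed

lemma ps: fixes q s1 :: "'a::field_char_0 poly"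
  shows "pderiv (q ^ Suc K' * s1) = q ^ K' * (q * pderiv s1) + smult (of_nat (Suc K')) (q ^ K' * (s1 * pderiv q))"
  by (simp only: pderiv_mult pderiv_power_Suc mult_smult_left mult_smult_right) (simp add: algebra_simps)
lemma N: fixes q s1 p1 :: "'a::field_char_0 poly"
  assumes "pS = q ^ K' * (q * pderiv s1) + smult c (q ^ K' * (s1 * pderiv q))"
  shows "pderiv p1 * (q ^ Suc K' * s1) - p1 * pS = q ^ K' * (pderiv p1 * q * s1 - p1 * q * pderiv s1 - smult c (p1 * s1 * pderiv q))"
  unfolding assms by (simp add: algebra_simps mult_smult_right mult_smult_left smult_diff_right)

lemma deriv_neg:
  fixes q :: "'k::{field_char_0,field_gcd} poly"
  assumes q: "prime_elem q" and c0: "c \<noteq> 0" and neg: "vq q c < 0"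
  shows "rf_deriv c \<noteq> 0 \<and> vq q (rf_deriv c) = vq q c - 1"
proof (cases c rule: Fract_cases_nonzero)
  case 0 thus ?thesis using c0 by simp
next
  case (Fract p s)
  have q0: "q \<noteq> 0" using q by (simp add: prime_elem_not_zeroI)
  have qnu: "\<not> is_unit q" using q by (simp add: prime_elem_def)
  have dq: "degree q \<noteq> 0" using qnu q0 is_unit_iff_degree by blast
  have nqd: "\<not> q dvd pderiv q"
  proof
    assume "q dvd pderiv q"
    hence "degree q = 0" by simp
    with dq show False by simp
  qed
  obtain p1 s1 a b where P: "p = q ^ a * p1" "\<not> q dvd p1"
    and S: "s = q ^ b * s1" "\<not> q dvd s1" and ab: "a = multiplicity q p" "b = multiplicity q s"
    by (rule decomp_Fract[OF q Fract(3) Fract(2)])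
  have p10: "p1 \<noteq> 0" and s10: "s1 \<noteq> 0" using P S by auto
  have "int a - int b < 0" using neg Fract q ab by (simp add: vq_Fract)
  hence lt: "a < b" by simp
  define K' where "K' = b - a - 1"
  have K': "b = a + Suc K'" using lt by (simp add: K'_def)
  define K where "K = Suc K'"
  define S1 where "S1 = q ^ K * s1"
  have S10: "S1 \<noteq> 0" using q0 s10 by (simp add: S1_def)
  have "s = q ^ a * S1" unfolding S(1) K' S1_def K_def by (simp add: power_add mult.assoc)
  hence "c = Fract (q ^ a * p1) (q ^ a * S1)"
    using Fract(1) P(1) by simp
  also have "\<dots> = Fract p1 S1"
    by (rule mult_fract_cancel) (use q0 in simp)
  finally have c': "c = Fract p1 S1" .
  have mp1: "multiplicity q p1 = 0" using P(2) by (simp add: not_dvd_imp_multiplicity_0)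
  have ms1: "multiplicity q s1 = 0" using S(2) by (simp add: not_dvd_imp_multiplicity_0)
  have vc: "vq q c = - int K"
    unfolding c' using q p10 S10 by (simp add: vq_Fract S1_def mult_qpow s10 mp1 ms1)
  define N2 where "N2 = pderiv p1 * q * s1 - p1 * q * pderiv s1 - smult (of_nat K) (p1 * s1 * pderiv q)"
  have N: "pderiv p1 * S1 - p1 * pderiv S1 = q ^ K' * N2"
    unfolding S1_def N2_def K_def by (rule N[OF ps])
  have N2nd: "\<not> q dvd N2"
  proof
    assume "q dvd N2"
    moreover have "q dvd pderiv p1 * q * s1 - p1 * q * pderiv s1" by (simp add: dvd_diff)
    ultimately have "q dvd (pderiv p1 * q * s1 - p1 * q * pderiv s1) - N2" by (rule dvd_diff[rotated])
    moreover have "(pderiv p1 * q * s1 - p1 * q * pderiv s1) - N2 = smult (of_nat K) (p1 * s1 * pderiv q)"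
      unfolding N2_def by simp
    ultimately have "q dvd smult (of_nat K) (p1 * s1 * pderiv q)" by simp
    hence "q dvd p1 * s1 * pderiv q" by (rule dvd_smult_cancel) (unfold K_def, rule of_nat_neq_0)
    thus False using P(2) S(2) nqd q prime_elem_dvd_mult_iff by blast
  qed
  have N20: "N2 \<noteq> 0" using N2nd by auto
  have mN2: "multiplicity q N2 = 0" using N2nd by (simp add: not_dvd_imp_multiplicity_0)
  have rd: "rf_deriv c = Fract (q ^ K' * N2) (S1 * S1)"
    unfolding c' using S10 by (simp add: rf_deriv_Fract N)
  have "rf_deriv c \<noteq> 0" unfolding rd using S10 N20 q0 by (simp add: Fract_eq0_iff)
  moreover have "vq q (rf_deriv c) = int K' - 2 * int K"
  proof -
    have "multiplicity q (S1 * S1) = 2 * K"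
      using q S10 by (simp add: prime_elem_multiplicity_mult_distrib S1_def mult_qpow s10 ms1)
    thus ?thesis unfolding rd using q S10 N20 q0 by (simp add: vq_Fract mult_qpow mN2)
  qed
  ultimately show ?thesis using vc by (simp add: K_def)
qed

lemma iota_props:
  assumes "alg_closure_of (\<iota> :: 'k::field \<Rightarrow> 'c::field)"
  shows "\<iota> 0 = 0" "\<And>x y. \<iota> (x + y) = \<iota> x + \<iota> y" "\<And>x y. \<iota> (x * y) = \<iota> x * \<iota> y"
    "\<iota> 1 = 1" "\<And>x. x \<noteq> 0 \<Longrightarrow> \<iota> x \<noteq> 0"
proof -
  have add: "\<And>x y. \<iota> (x + y) = \<iota> x + \<iota> y" and mul: "\<And>x y. \<iota> (x * y) = \<iota> x * \<iota> y"
    and one: "\<iota> 1 = 1" using assms unfolding alg_closure_of_def by auto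
  show "\<And>x y. \<iota> (x + y) = \<iota> x + \<iota> y" "\<And>x y. \<iota> (x * y) = \<iota> x * \<iota> y" "\<iota> 1 = 1" by fact+
  have "\<iota> 0 = \<iota> 0 + \<iota> 0" using add[of 0 0] by simp
  thus "\<iota> 0 = 0" by (metis add_cancel_right_right)
  fix x :: 'k assume "x \<noteq> 0"
  hence "\<iota> x * \<iota> (inverse x) = 1" using mul[of x "inverse x"] one by simp
  thus "\<iota> x \<noteq> 0" by auto
qed

lemma map_iota_add:
  assumes "\<iota> 0 = 0" "\<And>x y. \<iota> (x + y) = \<iota> x + \<iota> y"
  shows "map_poly \<iota> (p + r) = map_poly \<iota> p + map_poly \<iota> r"
proof -
  have c: "coeff (map_poly \<iota> x) n = \<iota> (coeff x n)" for x n by (rule coeff_map_poly[where f=\<iota>, OF assms(1)])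
  show ?thesis by (rule poly_eqI) (simp only: c coeff_add assms(2))
qed

lemma map_iota_mult:
  fixes \<iota> :: "'k::field \<Rightarrow> 'c::field"
  assumes z: "\<iota> 0 = 0" and ad: "\<And>x y. \<iota> (x + y) = \<iota> x + \<iota> y" and mu: "\<And>x y. \<iota> (x * y) = \<iota> x * \<iota> y"
  shows "map_poly \<iota> (p * r) = map_poly \<iota> p * map_poly \<iota> r"
proof (induction p)
  case 0 thus ?case by simp
next
  case (pCons c p)
  have "map_poly \<iota> (pCons c p * r) = map_poly \<iota> (smult c r + pCons 0 (p * r))" by simp
  also have "\<dots> = smult (\<iota> c) (map_poly \<iota> r) + pCons 0 (map_poly \<iota> p * map_poly \<iota> r)"
    by (simp add: map_iota_add[OF z ad] map_poly_smult[where f=\<iota>, OF z mu] map_poly_pCons[where f=\<iota>, OF z] z pCons.IH)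
  also have "\<dots> = map_poly \<iota> (pCons c p) * map_poly \<iota> r"
    by (simp add: map_poly_pCons[where f=\<iota>, OF z] z)
  finally show ?case .
qed

lemma root_prime_factor:
  fixes d :: "'k::{field_char_0,field_gcd} poly" and \<iota> :: "'k \<Rightarrow> 'c::field"
  assumes cl: "alg_closure_of \<iota>" and d0: "d \<noteq> 0" and r: "poly (map_poly \<iota> d) a = 0"
  shows "\<exists>q. prime q \<and> q dvd d \<and> poly (map_poly \<iota> q) a = 0"
  using d0 r
proof (induction "degree d" arbitrary: d rule: less_induct)
  case less
  note ip = iota_props[OF cl]
  have ev: "poly (map_poly \<iota> (x * y)) a = poly (map_poly \<iota> x) a * poly (map_poly \<iota> y) a" for x y :: "'k poly"
    by (simp add: map_iota_mult[OF ip(1) ip(2) ip(3)])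
  show ?case
  proof (cases "is_unit d")
    case True
    hence "degree d = 0" using less.prems(1) is_unit_iff_degree by blast
    then obtain c where c: "d = [:c:]" by (metis degree_eq_zeroE)
    hence "c \<noteq> 0" using less.prems(1) by simp
    hence "poly (map_poly \<iota> d) a \<noteq> 0" using c ip by (simp add: map_poly_pCons[where f=\<iota>, OF ip(1)])
    thus ?thesis using less.prems(2) by simp
  next
    case False
    obtain p where p: "p dvd d" "prime p" using prime_divisor_exists[OF less.prems(1) False] by blast
    then obtain r where dr: "d = p * r" by (elim dvdE)
    have r0: "r \<noteq> 0" using dr less.prems(1) by auto
    have p0: "p \<noteq> 0" using p by auto
    have pnu: "\<not> is_unit p" using p by (simp add: prime_def prime_elem_def)
    have "degree p \<noteq> 0" using pnu p0 is_unit_iff_degree by blast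
    hence deg: "degree r < degree d" using dr p0 r0 by (simp add: degree_mult_eq)
    have "poly (map_poly \<iota> p) a * poly (map_poly \<iota> r) a = 0" using less.prems(2) dr ev by simp
    hence "poly (map_poly \<iota> p) a = 0 \<or> poly (map_poly \<iota> r) a = 0" by simp
    thus ?thesis
    proof
      assume "poly (map_poly \<iota> p) a = 0" thus ?thesis using p by blast
    next
      assume "poly (map_poly \<iota> r) a = 0"
      then obtain q where "prime q" "q dvd r" "poly (map_poly \<iota> q) a = 0" using less.hyps[OF deg r0] by blast
      thus ?thesis using dr by (metis dvd_mult)
    qed
  qed
qed

lemma smult_sum_right: "smult c (sum f A) = (\<Sum>x\<in>A. smult c (f x))"
  by (induction A rule: infinite_finite_induct) (auto simp: smult_add_right)

lemma dvd_diff_trans: "P dvd (x - y) \<Longrightarrow> P dvd (y - z) \<Longrightarrow> P dvd (x - (z :: 'a :: comm_ring_1))"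
proof -
  assume "P dvd (x - y)" "P dvd (y - z)"
  hence "P dvd (x - y) + (y - z)" by (rule dvd_add)
  thus ?thesis by simp
qed

lemma dvd_diff_sum: "(\<And>i. i \<in> A \<Longrightarrow> P dvd (f i - g i)) \<Longrightarrow> P dvd (sum f A - sum (g :: _ \<Rightarrow> 'a :: comm_ring_1) A)"
  by (simp add: sum_subtractf[symmetric] dvd_sum)

lemma dvd_diff_smult: "P dvd (x - y) \<Longrightarrow> P dvd (smult c x - smult c (y :: 'a :: field poly))"
  by (simp add: smult_diff_right[symmetric] dvd_smult)

lemma coeff_eq:
  fixes m :: "'k::{field_char_0,field_gcd} poly poly"
  assumes irr: "irreducible (mR m)" and bas: "is_basis m W" and dr: "deriv_rel m W e M"
    and e0: "e \<noteq> 0" and int: "integrable m (\<Sum>i<degree m. smult (hc i) (W i))"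
  shows "\<exists>c. \<forall>j<degree m. hc j = rf_deriv (c j) + (\<Sum>i<degree m. c i * Fract (M i j) e)"
proof -
  define n where "n = degree m"
  define P where "P = mR m"
  define Dy where "Dy = Dp (ypm m)"
  define h where "h = (\<Sum>i<n. smult (hc i) (W i))"
  from int obtain H where H: "P dvd (A_deriv m H - h)" unfolding integrable_def P_def h_def n_def by blast
  from bas obtain c where c: "P dvd (H - (\<Sum>i<n. smult (c i) (W i)))" unfolding is_basis_def P_def n_def by blast
  define g where "g j = rf_deriv (c j) + (\<Sum>i<n. c i * Fract (M i j) e)" for j
  have ADy: "P dvd (A_deriv m x - Dy x)" for x unfolding P_def Dy_def by (rule A_deriv_cong_Dp)
  have ADy': "P dvd (Dy x - A_deriv m x)" for x using ADy[of x] by (metis dvd_minus_iff minus_diff_eq)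
  have H': "P dvd (h - A_deriv m H)" using H by (metis dvd_minus_iff minus_diff_eq)
  have step1: "P dvd (h - Dy H)"
    using dvd_diff_trans[OF H' ADy] .
  have step2: "P dvd (Dy H - Dy (\<Sum>i<n. smult (c i) (W i)))"
    unfolding Dy_def P_def by (rule Dp_cong[OF irr c[unfolded P_def]])
  have step3: "Dy (\<Sum>i<n. smult (c i) (W i)) = (\<Sum>i<n. smult (rf_deriv (c i)) (W i) + smult (c i) (Dy (W i)))"
    unfolding Dy_def by (simp add: Dp_sum Dp_smult)
  have step4: "P dvd (smult (c i) (Dy (W i)) - (\<Sum>j<n. smult (c i * Fract (M i j) e) (W j)))" if i: "i < n" for i
  proof -
    have d1: "P dvd (smult (to_fract e) (A_deriv m (W i)) - (\<Sum>j<n. smult (to_fract (M i j)) (W j)))"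
      using dr i unfolding deriv_rel_def P_def n_def by blast
    have d2: "P dvd (smult (c i / to_fract e) (smult (to_fract e) (A_deriv m (W i)))
               - smult (c i / to_fract e) (\<Sum>j<n. smult (to_fract (M i j)) (W j)))"
      by (rule dvd_diff_smult[OF d1])
    have e1: "smult (c i / to_fract e) (smult (to_fract e) (A_deriv m (W i))) = smult (c i) (A_deriv m (W i))"
      using e0 by simp
    have e2: "smult (c i / to_fract e) (\<Sum>j<n. smult (to_fract (M i j)) (W j)) = (\<Sum>j<n. smult (c i * Fract (M i j) e) (W j))"
      by (simp add: smult_sum_right Fract_conv_to_fract)
    have d3: "P dvd (smult (c i) (Dy (W i)) - smult (c i) (A_deriv m (W i)))"
      by (rule dvd_diff_smult[OF ADy'])
    show ?thesis using dvd_diff_trans[OF d3 d2[unfolded e1 e2]] .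
  qed
  have step5: "P dvd (Dy (\<Sum>i<n. smult (c i) (W i)) - (\<Sum>i<n. smult (rf_deriv (c i)) (W i) + (\<Sum>j<n. smult (c i * Fract (M i j) e) (W j))))"
    unfolding step3 by (rule dvd_diff_sum) (simp add: step4)
  have step6: "(\<Sum>i<n. smult (rf_deriv (c i)) (W i) + (\<Sum>j<n. smult (c i * Fract (M i j) e) (W j))) = (\<Sum>j<n. smult (g j) (W j))"
  proof -
    have "(\<Sum>i<n. \<Sum>j<n. smult (c i * Fract (M i j) e) (W j)) = (\<Sum>j<n. \<Sum>i<n. smult (c i * Fract (M i j) e) (W j))"
      by (rule sum.swap)
    also have "\<dots> = (\<Sum>j<n. smult (\<Sum>i<n. c i * Fract (M i j) e) (W j))"
      by (simp add: smult_sum)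
    finally show ?thesis unfolding g_def by (simp add: sum.distrib smult_add_left)
  qed
  have "P dvd (h - (\<Sum>j<n. smult (g j) (W j)))"
    using dvd_diff_trans[OF dvd_diff_trans[OF step1 step2] step5[unfolded step6]] .
  also have "h - (\<Sum>j<n. smult (g j) (W j)) = (\<Sum>j<n. smult (hc j - g j) (W j))"
    unfolding h_def by (simp add: sum_subtractf[symmetric] smult_diff_left)
  finally have dd: "P dvd (\<Sum>j<n. smult (hc j - g j) (W j))" .
  have indep: "\<And>cc. P dvd (\<Sum>i<n. smult (cc i) (W i)) \<Longrightarrow> \<forall>i<n. cc i = 0"
    using bas unfolding is_basis_def P_def n_def by blast
  have "\<forall>j<n. hc j - g j = 0" by (rule indep[OF dd])
  hence "\<forall>j<n. hc j = g j" by simp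
  thus ?thesis unfolding g_def n_def by blast
qed

theorem lemma7:
  fixes m :: "'k::{field_char_0,field_gcd} poly poly" and \<iota> :: "'k \<Rightarrow> 'c::field"
    and W :: "nat \<Rightarrow> 'k poly fract poly" and e d :: "'k poly"
    and M :: "nat \<Rightarrow> nat \<Rightarrow> 'k poly" and hs :: "nat \<Rightarrow> 'k poly" and a :: 'c
  assumes "alg_closure_of \<iota>"
    and "irreducible (mR m)"
    and "suitable_basis \<iota> m W"
    and "deriv_rel m W e M"
    and "Gcd (insert e {M i i |i. i < degree m}) = 1"
    and "gcd d e = 1"
    and "Gcd (insert d (hs ` {..<degree m})) = 1"
    and "squarefree d"
    and "integrable m (\<Sum>i<degree m. smult (Fract (hs i) (d * e)) (W i))"
    and "local_integral_basis \<iota> m a W"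
  shows "poly (map_poly \<iota> d) a \<noteq> 0"
proof
  assume root: "poly (map_poly \<iota> d) a = 0"
  define n where "n = degree m"
  have d0: "d \<noteq> 0" using assms(8) by auto
  obtain q where qp: "prime q" and qd: "q dvd d" and qa: "poly (map_poly \<iota> q) a = 0"
    using root_prime_factor[OF assms(1) d0 root] by blast
  have q: "prime_elem q" using qp by simp
  have qnu: "\<not> is_unit q" using q by (simp add: prime_elem_def)
  have q0: "q \<noteq> 0" using q by (simp add: prime_elem_not_zeroI)
  have qe: "\<not> q dvd e"
  proof
    assume "q dvd e"
    hence "q dvd gcd d e" using qd by simp
    thus False using assms(6) qnu by simp
  qed
  have e0: "e \<noteq> 0" using qe by auto
  have md: "multiplicity q d = 1"
  proof -
    have "multiplicity q d \<ge> 1" using qd d0 qnu by (simp add: multiplicity_geI)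
    moreover have "\<not> q ^ 2 dvd d" using assms(8) qnu unfolding squarefree_def by blast
    hence "multiplicity q d < 2" using d0 qnu multiplicity_lessI by blast
    ultimately show ?thesis by simp
  qed
  have me: "multiplicity q e = 0" using qe by (simp add: not_dvd_imp_multiplicity_0)
  obtain j0 where j0: "j0 < n" "\<not> q dvd hs j0"
  proof (rule ccontr)
    assume "\<not> thesis"
    hence "\<forall>j<n. q dvd hs j" using that by blast
    hence "q dvd Gcd (insert d (hs ` {..<degree m}))" using qd by (auto intro!: Gcd_greatest simp: n_def)
    hence "q dvd 1" by (simp only: assms(7))
    thus False using qnu by simp
  qed
  have vh: "okq q (-1) (Fract (hs j) (d * e))" for j
  proof (cases "hs j = 0")
    case True thus ?thesis by (simp add: fract_collapse)
  next
    case False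
    thus ?thesis using q d0 e0 by (simp add: okq_def vq_Fract prime_elem_multiplicity_mult_distrib md me)
  qed
  have vh0: "Fract (hs j0) (d * e) \<noteq> 0 \<and> vq q (Fract (hs j0) (d * e)) = -1"
  proof -
    have "hs j0 \<noteq> 0" using j0 by auto
    moreover have "multiplicity q (hs j0) = 0" using j0 by (simp add: not_dvd_imp_multiplicity_0)
    ultimately show ?thesis using q d0 e0
      by (simp add: Fract_eq0_iff vq_Fract prime_elem_multiplicity_mult_distrib md me)
  qed
  have bas: "is_basis m W" using assms(10) unfolding local_integral_basis_def by blast
  obtain c where c: "\<forall>j<n. Fract (hs j) (d * e) = rf_deriv (c j) + (\<Sum>i<n. c i * Fract (M i j) e)"
    using coeff_eq[OF assms(2) bas assms(4) e0 assms(9)] unfolding n_def by blast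
  have okM: "okq q 0 (Fract (M i j) e)" for i j by (rule okq_Fract0[OF q qe e0])
  show False
  proof (cases "\<forall>i<n. okq q 0 (c i)")
    case True
    have "okq q 0 (rf_deriv (c j0) + (\<Sum>i<n. c i * Fract (M i j0) e))"
    proof (rule okq_add[OF q])
      show "okq q 0 (rf_deriv (c j0))" using deriv_ok0[OF q] True j0 by blast
      show "okq q 0 (\<Sum>i<n. c i * Fract (M i j0) e)"
        by (rule okq_sum[OF q]) (use okq_mult[OF q _ okM] True in fastforce)
    qed
    hence "okq q 0 (Fract (hs j0) (d * e))" using c j0 by simp
    thus False using vh0 by (simp add: okq_def)
  next
    case False
    define V where "V = (\<lambda>i. vq q (c i)) ` {i. i < n \<and> c i \<noteq> 0}"
    have Vf: "finite V" unfolding V_def by simp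
    have Vne: "V \<noteq> {}" using False unfolding V_def okq_def by auto
    define mu where "mu = Min V"
    obtain i0 where i0: "i0 < n" "c i0 \<noteq> 0" "vq q (c i0) = mu"
      using Min_in[OF Vf Vne] unfolding mu_def V_def by auto
    have mule: "mu \<le> vq q (c i)" if "i < n" "c i \<noteq> 0" for i
      using Min_le[OF Vf] that unfolding mu_def V_def by auto
    have muneg: "mu < 0"
    proof -
      obtain i where "i < n" "\<not> okq q 0 (c i)" using False by blast
      hence "i < n" "c i \<noteq> 0" "vq q (c i) < 0" by (auto simp: okq_def)
      thus ?thesis using mule by fastforce
    qed
    have okc: "okq q mu (c i)" if "i < n" for i using mule[OF that] by (auto simp: okq_def)
    have dn: "rf_deriv (c i0) \<noteq> 0 \<and> vq q (rf_deriv (c i0)) = mu - 1"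
      using deriv_neg[OF q i0(2)] i0(3) muneg by simp
    have oks: "okq q mu (\<Sum>i<n. c i * Fract (M i i0) e)"
      by (rule okq_sum[OF q]) (use okq_mult[OF q okc okM] in fastforce)
    have "rf_deriv (c i0) + (\<Sum>i<n. c i * Fract (M i i0) e) \<noteq> 0 \<and>
          vq q (rf_deriv (c i0) + (\<Sum>i<n. c i * Fract (M i i0) e)) = mu - 1"
      using okq_strict[OF q _ _ oks] dn by simp
    hence "Fract (hs i0) (d * e) \<noteq> 0 \<and> vq q (Fract (hs i0) (d * e)) = mu - 1" using c i0 by simp
    moreover have "okq q (-1) (Fract (hs i0) (d * e))" by (rule vh)
    ultimately show False using muneg by (simp add: okq_def)
  qed
qed

end
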